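(* Let $(\beta_n),(\gamma_n)$ be sequences of positive real numbers that are non-decreasing, satisfy $\gamma_n\ge\beta_n$ for all $n$ and $\gamma_n-\beta_n\to\infty$. Let $t=(t_n)$ be a sequence of positive real numbers with $T_{\beta\gamma(n)}:=\sum_{k\in[\beta_n,\gamma_n]}t_k\to\infty$ as $n\to\infty$ (the sum being over positive integers $k$ in $[\beta_n,\gamma_n]$). For $\theta\in(0,1]$, say that a sequence $(\hat f_k)$ of fuzzy functions $\hat f_k:[a,b]\to L(\mathbb R)$ belongs to $N^{\theta}_{\beta\gamma}(t)$ (with limit $\hat f:[a,b]\to L(\mathbb R)$) if for every $x\in[a,b]$, $$\frac{1}{T_{\beta\gamma(n)}^{\theta}}\sum_{k\in[\beta_n,\gamma_n]}t_k\,d(\hat f_k(x),\hat f(x))\to 0\quad (n\to\infty).$$ Then: (i) If $(\hat f_k)\in N^{\theta}_{\beta\gamma}(t)$ with limit $\hat f$ and $(\hat g_k)\in N^{\theta}_{\beta\gamma}(t)$ with limit $\hat g$, then $(\hat f_k+\hat g_k)\in N^{\theta}_{\beta\gamma}(t)$ (with limit $\hat f+\hat g$) and $(c\hat f_k)\in N^{\theta}_{\beta\gamma}(t)$ (with limit $c\hat f$) for every $c\in\mathbb R$. (ii) If $0<\theta\le\delta\le1$, then $N^{\theta}_{\beta\gamma}(t)\subseteq N^{\delta}_{\beta\gamma}(t)$; moreover, the inclusion is strict for some $\theta<\delta$.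
   Context: $L(\mathbb R)$ denotes the set of fuzzy real numbers: maps $\hat x:\mathbb R\to[0,1]$ that are normal, fuzzy convex, upper semicontinuous, with $\{t:\hat x(t)>0\}$ having compact closure. For $\alpha\in(0,1]$ the $\alpha$-cut is $[\hat x]_\alpha=\{t:\hat x(t)\ge\alpha\}=[(\hat x)^-_\alpha,(\hat x)^+_\alpha]$. The metric on $L(\mathbb R)$ is $d(\hat x,\hat y)=\sup_{0\le\alpha\le1}\max\{|(\hat x)^-_\alpha-(\hat y)^-_\alpha|,|(\hat x)^+_\alpha-(\hat y)^+_\alpha|\}$. Addition and real scalar multiplication of fuzzy numbers are the usual ones (via $\alpha$-cuts). A fuzzy function on $[a,b]$ is a map $[a,b]\to L(\mathbb R)$; operations on fuzzy functions are pointwise. *)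

theory Defs
  imports "HOL-Analysis.Analysis"
begin

text \<open>Fuzzy real numbers are represented by their membership functions real => real.\<close>

definition usc_fun :: "(real \<Rightarrow> real) \<Rightarrow> bool" where
  "usc_fun u \<longleftrightarrow> (\<forall>x. \<forall>e>0. \<exists>d>0. \<forall>y. \<bar>y - x\<bar> < d \<longrightarrow> u y < u x + e)"

definition fuzzy_number :: "(real \<Rightarrow> real) \<Rightarrow> bool" where
  "fuzzy_number u \<longleftrightarrow>
     (\<forall>t. 0 \<le> u t \<and> u t \<le> 1) \<and>
     (\<exists>t. u t = 1) \<and>
     (\<forall>x y l. 0 \<le> l \<and> l \<le> 1 \<longrightarrow> min (u x) (u y) \<le> u (l * x + (1 - l) * y)) \<and>
     usc_fun u \<and>
     compact (closure {t. u t > 0})"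

definition fcut :: "(real \<Rightarrow> real) \<Rightarrow> real \<Rightarrow> real set" where
  "fcut u a = (if a = 0 then closure {t. u t > 0} else {t. a \<le> u t})"

definition fcut_lo :: "(real \<Rightarrow> real) \<Rightarrow> real \<Rightarrow> real" where
  "fcut_lo u a = Inf (fcut u a)"

definition fcut_hi :: "(real \<Rightarrow> real) \<Rightarrow> real \<Rightarrow> real" where
  "fcut_hi u a = Sup (fcut u a)"

definition fdist :: "(real \<Rightarrow> real) \<Rightarrow> (real \<Rightarrow> real) \<Rightarrow> real" where
  "fdist u v = (SUP a\<in>{0..1}. max \<bar>fcut_lo u a - fcut_lo v a\<bar> \<bar>fcut_hi u a - fcut_hi v a\<bar>)"

definition fadd :: "(real \<Rightarrow> real) \<Rightarrow> (real \<Rightarrow> real) \<Rightarrow> (real \<Rightarrow> real)" where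
  "fadd u v = (\<lambda>t. SUP s. min (u s) (v (t - s)))"

definition fscale :: "real \<Rightarrow> (real \<Rightarrow> real) \<Rightarrow> (real \<Rightarrow> real)" where
  "fscale c u = (if c = 0 then (\<lambda>t. if t = 0 then 1 else 0) else (\<lambda>t. u (t / c)))"

definition fuzzy_fun :: "real \<Rightarrow> real \<Rightarrow> (real \<Rightarrow> real \<Rightarrow> real) \<Rightarrow> bool" where
  "fuzzy_fun a b f \<longleftrightarrow> (\<forall>x\<in>{a..b}. fuzzy_number (f x))"

definition bg_idx :: "(nat \<Rightarrow> real) \<Rightarrow> (nat \<Rightarrow> real) \<Rightarrow> nat \<Rightarrow> nat set" where
  "bg_idx \<beta> \<gamma> n = {k. 1 \<le> k \<and> \<beta> n \<le> real k \<and> real k \<le> \<gamma> n}"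

definition Tbg :: "(nat \<Rightarrow> real) \<Rightarrow> (nat \<Rightarrow> real) \<Rightarrow> (nat \<Rightarrow> real) \<Rightarrow> nat \<Rightarrow> real" where
  "Tbg \<beta> \<gamma> t n = (\<Sum>k\<in>bg_idx \<beta> \<gamma> n. t k)"

definition N_lim :: "real \<Rightarrow> real \<Rightarrow> real \<Rightarrow> (nat \<Rightarrow> real) \<Rightarrow> (nat \<Rightarrow> real) \<Rightarrow> (nat \<Rightarrow> real)
    \<Rightarrow> (nat \<Rightarrow> real \<Rightarrow> real \<Rightarrow> real) \<Rightarrow> (real \<Rightarrow> real \<Rightarrow> real) \<Rightarrow> bool" where
  "N_lim \<theta> a b \<beta> \<gamma> t fs f \<longleftrightarrow>
     (\<forall>k. fuzzy_fun a b (fs k)) \<and> fuzzy_fun a b f \<and>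
     (\<forall>x\<in>{a..b}. ((\<lambda>n. (1 / (Tbg \<beta> \<gamma> t n) powr \<theta>) *
        (\<Sum>k\<in>bg_idx \<beta> \<gamma> n. t k * fdist (fs k x) (f x))) \<longlongrightarrow> 0) sequentially)"

definition N_set :: "real \<Rightarrow> real \<Rightarrow> real \<Rightarrow> (nat \<Rightarrow> real) \<Rightarrow> (nat \<Rightarrow> real) \<Rightarrow> (nat \<Rightarrow> real)
    \<Rightarrow> (nat \<Rightarrow> real \<Rightarrow> real \<Rightarrow> real) set" where
  "N_set \<theta> a b \<beta> \<gamma> t = {fs. \<exists>f. N_lim \<theta> a b \<beta> \<gamma> t fs f}"

end

theory Submission
  imports Defs
begin


definition supp :: "(real \<Rightarrow> real) \<Rightarrow> real set" where
  "supp u = {t. 0 < u t}"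

definition cutset :: "(real \<Rightarrow> real) \<Rightarrow> real \<Rightarrow> real set" where
  "cutset u a = (if a = 0 then supp u else {t. a \<le> u t})"

definition crisp :: "real \<Rightarrow> real \<Rightarrow> real" where
  "crisp r = (\<lambda>t. if t = r then 1 else 0)"

definition fterm :: "(real \<Rightarrow> real) \<Rightarrow> (real \<Rightarrow> real) \<Rightarrow> real \<Rightarrow> real" where
  "fterm u v a = max \<bar>fcut_lo u a - fcut_lo v a\<bar> \<bar>fcut_hi u a - fcut_hi v a\<bar>"

lemma fdist_alt: "fdist u v = (SUP a\<in>{0..1}. fterm u v a)"
  unfolding fdist_def fterm_def by simp

lemma fn_range: "fuzzy_number u \<Longrightarrow> 0 \<le> u t \<and> u t \<le> 1"
  by (simp add: fuzzy_number_def)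

lemma fn_normal: "fuzzy_number u \<Longrightarrow> \<exists>t. u t = 1"
  by (simp add: fuzzy_number_def)

lemma fn_bounded: "fuzzy_number u \<Longrightarrow> bounded (supp u)"
  unfolding fuzzy_number_def supp_def using compact_closure by blast

lemma cutset_sub: "0 \<le> a \<Longrightarrow> cutset u a \<subseteq> supp u"
  unfolding cutset_def supp_def by auto

lemma cutset_ne: "fuzzy_number u \<Longrightarrow> a \<le> 1 \<Longrightarrow> cutset u a \<noteq> {}"
proof -
  assume u: "fuzzy_number u" and a: "a \<le> 1"
  obtain t where "u t = 1" using fn_normal[OF u] by blast
  then have "t \<in> cutset u a" using a unfolding cutset_def supp_def by auto
  then show ?thesis by blast
qed

lemma Inf_closure_eq:
  fixes S :: "real set"
  assumes "S \<noteq> {}" "bdd_below S"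
  shows "Inf (closure S) = Inf S"
proof -
  have sub: "closure S \<subseteq> {Inf S..}"
    by (rule closure_minimal) (use assms cInf_lower in auto)
  have ne: "closure S \<noteq> {}" using assms closure_subset by blast
  have bb: "bdd_below (closure S)" using sub by (meson bdd_below_Ici bdd_below_mono)
  have "Inf S \<le> Inf (closure S)" using sub ne by (meson atLeast_iff cInf_greatest subsetD)
  moreover have "Inf (closure S) \<le> Inf S"
    by (rule cInf_superset_mono) (use assms bb closure_subset in auto)
  ultimately show ?thesis by simp
qed

lemma Sup_closure_eq:
  fixes S :: "real set"
  assumes "S \<noteq> {}" "bdd_above S"
  shows "Sup (closure S) = Sup S"
proof -
  have sub: "closure S \<subseteq> {..Sup S}"
    by (rule closure_minimal) (use assms cSup_upper in auto)
  have ne: "closure S \<noteq> {}" using assms closure_subset by blast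
  have bb: "bdd_above (closure S)" using sub by (meson bdd_above_Iic bdd_above_mono)
  have "Sup (closure S) \<le> Sup S" using sub ne by (meson atMost_iff cSup_least subsetD)
  moreover have "Sup S \<le> Sup (closure S)"
    by (rule cSup_subset_mono) (use assms bb closure_subset in auto)
  ultimately show ?thesis by simp
qed

lemma cutset_bdd:
  assumes "fuzzy_number u" "0 \<le> a"
  shows "bdd_below (cutset u a)" "bdd_above (cutset u a)" "bounded (cutset u a)"
  using fn_bounded[OF assms(1)] cutset_sub[OF assms(2), of u]
  by (meson bounded_imp_bdd_below bounded_imp_bdd_above bounded_subset)+

lemma lo_eq:
  assumes "fuzzy_number u" "0 \<le> a" "a \<le> 1"
  shows "fcut_lo u a = Inf (cutset u a)"
proof (cases "a = 0")
  case True
  have "supp u \<noteq> {}" using cutset_ne[OF assms(1), of 0] True by (simp add: cutset_def)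
  moreover have "bdd_below (supp u)" by (intro bounded_imp_bdd_below fn_bounded assms(1))
  ultimately show ?thesis using True Inf_closure_eq
    by (simp add: fcut_lo_def fcut_def cutset_def supp_def)
next
  case False
  then show ?thesis by (simp add: fcut_lo_def fcut_def cutset_def)
qed

lemma hi_eq:
  assumes "fuzzy_number u" "0 \<le> a" "a \<le> 1"
  shows "fcut_hi u a = Sup (cutset u a)"
proof (cases "a = 0")
  case True
  have "supp u \<noteq> {}" using cutset_ne[OF assms(1), of 0] True by (simp add: cutset_def)
  moreover have "bdd_above (supp u)" by (intro bounded_imp_bdd_above fn_bounded assms(1))
  ultimately show ?thesis using True Sup_closure_eq
    by (simp add: fcut_hi_def fcut_def cutset_def supp_def)
next
  case False
  then show ?thesis by (simp add: fcut_hi_def fcut_def cutset_def)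
qed

lemma fn_bound:
  assumes u: "fuzzy_number u"
  shows "\<exists>B. \<forall>a\<in>{0..1}. \<bar>fcut_lo u a\<bar> \<le> B \<and> \<bar>fcut_hi u a\<bar> \<le> B"
proof -
  obtain B where B: "\<forall>x\<in>supp u. \<bar>x\<bar> \<le> B"
    using fn_bounded[OF u] unfolding bounded_iff by auto
  have "\<bar>fcut_lo u a\<bar> \<le> B \<and> \<bar>fcut_hi u a\<bar> \<le> B" if a: "a \<in> {0..1}" for a
  proof -
    let ?A = "cutset u a"
    have ne: "?A \<noteq> {}" using cutset_ne[OF u] a by auto
    have AB: "\<forall>x\<in>?A. -B \<le> x \<and> x \<le> B" using B cutset_sub[of a u] a by force
    obtain x where x: "x \<in> ?A" using ne by blast
    have bb: "bdd_below ?A" "bdd_above ?A" using AB by (auto intro: bdd_belowI bdd_aboveI)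
    have "Inf ?A \<le> x" using cInf_lower[OF x bb(1)] .
    moreover have "-B \<le> Inf ?A" using AB ne by (meson cInf_greatest)
    moreover have "x \<le> Sup ?A" using cSup_upper[OF x bb(2)] .
    moreover have "Sup ?A \<le> B" using AB ne by (meson cSup_least)
    ultimately show ?thesis using lo_eq[OF u] hi_eq[OF u] a AB x by auto
  qed
  then show ?thesis by blast
qed

lemma fterm_bdd:
  assumes "fuzzy_number u" "fuzzy_number v"
  shows "bdd_above (fterm u v ` {0..1})"
proof -
  obtain B1 where B1: "\<forall>a\<in>{0..1}. \<bar>fcut_lo u a\<bar> \<le> B1 \<and> \<bar>fcut_hi u a\<bar> \<le> B1"
    using fn_bound[OF assms(1)] by blast
  obtain B2 where B2: "\<forall>a\<in>{0..1}. \<bar>fcut_lo v a\<bar> \<le> B2 \<and> \<bar>fcut_hi v a\<bar> \<le> B2"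
    using fn_bound[OF assms(2)] by blast
  have "fterm u v a \<le> B1 + B2" if "a \<in> {0..1}" for a
    using B1 B2 that unfolding fterm_def by fastforce
  then show ?thesis by (intro bdd_aboveI2[where M="B1+B2"]) auto
qed

lemma fterm_le_fdist:
  assumes "fuzzy_number u" "fuzzy_number v" "a \<in> {0..1}"
  shows "fterm u v a \<le> fdist u v"
  unfolding fdist_alt using cSUP_upper[OF assms(3) fterm_bdd[OF assms(1,2)]] .

lemma fdist_le:
  assumes "\<forall>a\<in>{0..1}. fterm u v a \<le> M"
  shows "fdist u v \<le> M"
  unfolding fdist_alt by (rule cSUP_least) (use assms in auto)

lemma fdist_nonneg:
  assumes "fuzzy_number u" "fuzzy_number v"
  shows "0 \<le> fdist u v"
proof -
  have "0 \<le> fterm u v 0" unfolding fterm_def by simp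
  also have "\<dots> \<le> fdist u v" using fterm_le_fdist[OF assms] by simp
  finally show ?thesis .
qed

lemma fdist_sym: "fdist u v = fdist v u"
  unfolding fdist_def by (simp add: abs_minus_commute)

lemma fdist_tri:
  assumes "fuzzy_number u" "fuzzy_number v" "fuzzy_number w"
  shows "fdist u w \<le> fdist u v + fdist v w"
proof (rule fdist_le, intro ballI)
  fix a :: real assume a: "a \<in> {0..1}"
  have "fterm u w a \<le> fterm u v a + fterm v w a"
    unfolding fterm_def by (simp add: abs_triangle_ineq4 max_def) linarith?
  also have "\<dots> \<le> fdist u v + fdist v w"
    using fterm_le_fdist[OF assms(1,2) a] fterm_le_fdist[OF assms(2,3) a] by simp
  finally show "fterm u w a \<le> fdist u v + fdist v w" .
qed



lemma crisp_fn: "fuzzy_number (crisp r)"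
proof -
  have usc: "usc_fun (crisp r)"
    unfolding usc_fun_def
  proof (intro allI impI)
    fix x e :: real assume e: "0 < e"
    show "\<exists>d>0. \<forall>y. \<bar>y - x\<bar> < d \<longrightarrow> crisp r y < crisp r x + e"
    proof (cases "x = r")
      case True
      then show ?thesis using e by (intro exI[of _ 1]) (auto simp: crisp_def)
    next
      case False
      then show ?thesis using e
        by (intro exI[of _ "\<bar>x - r\<bar>"]) (auto simp: crisp_def)
    qed
  qed
  have s: "{t. crisp r t > 0} = {r}" by (auto simp: crisp_def)
  have conv: "min (crisp r x) (crisp r y) \<le> crisp r (l * x + (1 - l) * y)"
    if "0 \<le> l" "l \<le> 1" for x y l
  proof (cases "x = r \<and> y = r")
    case True
    then have "l * x + (1 - l) * y = r" by (simp add: algebra_simps)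
    then show ?thesis using True by (simp add: crisp_def)
  next
    case False
    then have "min (crisp r x) (crisp r y) = 0" by (auto simp: crisp_def)
    then show ?thesis by (simp add: crisp_def)
  qed
  have r1: "crisp r r = 1" by (simp add: crisp_def)
  have rng: "0 \<le> crisp r t \<and> crisp r t \<le> 1" for t by (simp add: crisp_def)
  show ?thesis unfolding fuzzy_number_def s
    apply (intro conjI allI impI)
    apply (simp_all only: rng r1 usc)
    apply (rule exI[of _ r], rule r1)
    apply (rule conv; simp)
    apply simp
    done
qed

lemma crisp_cutset: "a \<in> {0..1} \<Longrightarrow> cutset (crisp r) a = {r}"
  by (auto simp: cutset_def supp_def crisp_def)

lemma crisp_lo: "a \<in> {0..1} \<Longrightarrow> fcut_lo (crisp r) a = r"
  using lo_eq[OF crisp_fn] crisp_cutset by auto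

lemma crisp_hi: "a \<in> {0..1} \<Longrightarrow> fcut_hi (crisp r) a = r"
  using hi_eq[OF crisp_fn] crisp_cutset by auto

lemma fdist_crisp: "fdist (crisp r) (crisp s) = \<bar>r - s\<bar>"
proof -
  have "fdist (crisp r) (crisp s) = (SUP a\<in>{0..1::real}. \<bar>r - s\<bar>)"
    unfolding fdist_alt fterm_def
    by (rule SUP_cong) (auto simp: crisp_lo crisp_hi)
  also have "\<dots> = \<bar>r - s\<bar>" by simp
  finally show ?thesis .
qed

lemma fscale0: "fscale 0 u = crisp 0"
  by (auto simp: fscale_def crisp_def)

lemma fscale_fn:
  assumes u: "fuzzy_number u"
  shows "fuzzy_number (fscale c u)"
proof (cases "c = 0")
  case True
  then show ?thesis by (simp add: fscale0 crisp_fn)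
next
  case c: False
  have f: "fscale c u = (\<lambda>t. u (t / c))" using c by (simp add: fscale_def)
  have range: "\<forall>t. 0 \<le> u (t/c) \<and> u (t/c) \<le> 1" using fn_range[OF u] by blast
  obtain t0 where t0: "u t0 = 1" using fn_normal[OF u] by blast
  have norm: "\<exists>t. u (t / c) = 1" using t0 c by (intro exI[of _ "c * t0"]) simp
  have conv: "min (u (x/c)) (u (y/c)) \<le> u ((l * x + (1 - l) * y)/c)"
    if "0 \<le> l" "l \<le> 1" for x y l
  proof -
    have "(l * x + (1 - l) * y)/c = l * (x/c) + (1 - l) * (y/c)" using c by (simp add: field_simps)
    then show ?thesis using u that unfolding fuzzy_number_def by metis
  qed
  have usc: "usc_fun (\<lambda>t. u (t / c))"
    unfolding usc_fun_def
  proof (intro allI impI)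
    fix x e :: real assume e: "0 < e"
    obtain d where d: "d > 0" "\<forall>y. \<bar>y - x/c\<bar> < d \<longrightarrow> u y < u (x/c) + e"
      using u e unfolding fuzzy_number_def usc_fun_def by blast
    show "\<exists>d>0. \<forall>y. \<bar>y - x\<bar> < d \<longrightarrow> u (y/c) < u (x/c) + e"
    proof (intro exI[of _ "d * \<bar>c\<bar>"] conjI allI impI)
      show "0 < d * \<bar>c\<bar>" using d c by simp
      fix y assume "\<bar>y - x\<bar> < d * \<bar>c\<bar>"
      then have "\<bar>y/c - x/c\<bar> < d" using c
        by (simp add: diff_divide_distrib[symmetric] abs_divide divide_less_eq)
      then show "u (y/c) < u (x/c) + e" using d by blast
    qed
  qed
  obtain B where B: "\<forall>x\<in>supp u. \<bar>x\<bar> \<le> B"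
    using fn_bounded[OF u] unfolding bounded_iff by auto
  have "bounded {t. 0 < u (t/c)}"
    unfolding bounded_iff
  proof (intro exI[of _ "\<bar>c\<bar> * B"] ballI)
    fix t assume "t \<in> {t. 0 < u (t/c)}"
    then have "\<bar>t/c\<bar> \<le> B" using B by (auto simp: supp_def)
    then show "norm t \<le> \<bar>c\<bar> * B" using c by (simp add: abs_divide divide_le_eq mult.commute)
  qed
  then have bnd: "compact (closure {t. 0 < u (t/c)})" by (simp add: compact_closure)
  show ?thesis unfolding f fuzzy_number_def
    by (intro conjI allI impI range[rule_format] norm conv usc bnd) auto
qed

lemma image_scale_set:
  fixes c :: real
  assumes c: "c \<noteq> 0"
  shows "{t. P (t / c)} = (\<lambda>x. c * x) ` {x. P x}"
proof (intro set_eqI iffI)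
  fix t assume "t \<in> {t. P (t / c)}"
  then have "t / c \<in> {x. P x}" "t = c * (t / c)" using c by auto
  then show "t \<in> (\<lambda>x. c * x) ` {x. P x}" by blast
next
  fix t assume "t \<in> (\<lambda>x. c * x) ` {x. P x}"
  then obtain x where "P x" "t = c * x" by blast
  then show "t \<in> {t. P (t / c)}" using c by simp
qed

lemma cutset_scale: "c \<noteq> 0 \<Longrightarrow> cutset (fscale c u) a = (\<lambda>x. c * x) ` cutset u a"
  unfolding cutset_def supp_def fscale_def
  using image_scale_set[of c "\<lambda>x. 0 < u x"] image_scale_set[of c "\<lambda>x. a \<le> u x"]
  by simp

lemma max_scale: "0 \<le> (k::real) \<Longrightarrow> max (k * A) (k * B) = k * max A B"
  by (simp add: max_mult_distrib_left)

lemma abs_scale: "\<bar>(c::real) * x - c * y\<bar> = \<bar>c\<bar> * \<bar>x - y\<bar>"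
  by (simp add: right_diff_distrib[symmetric] abs_mult)

lemma Inf_scale_pos:
  fixes A :: "real set"
  assumes "c > 0" "A \<noteq> {}" "bdd_below A"
  shows "Inf ((\<lambda>x. c * x) ` A) = c * Inf A"
proof -
  have "mono (\<lambda>x::real. c * x)" using assms(1) by (auto simp: mono_def)
  moreover have "continuous (at_right (Inf A)) (\<lambda>x::real. c * x)" by (intro continuous_intros)
  ultimately show ?thesis using continuous_at_Inf_mono[of "\<lambda>x. c * x" A] assms by simp
qed

lemma Sup_scale_pos:
  fixes A :: "real set"
  assumes "c > 0" "A \<noteq> {}" "bdd_above A"
  shows "Sup ((\<lambda>x. c * x) ` A) = c * Sup A"
proof -
  have "mono (\<lambda>x::real. c * x)" using assms(1) by (auto simp: mono_def)
  moreover have "continuous (at_left (Sup A)) (\<lambda>x::real. c * x)" by (intro continuous_intros)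
  ultimately show ?thesis using continuous_at_Sup_mono[of "\<lambda>x. c * x" A] assms by simp
qed

lemma Inf_scale_neg:
  fixes A :: "real set"
  assumes "c < 0" "A \<noteq> {}" "bdd_above A"
  shows "Inf ((\<lambda>x. c * x) ` A) = c * Sup A"
proof -
  have "antimono_on UNIV (\<lambda>x::real. c * x)" using assms(1)
    by (auto simp: monotone_on_def mult_left_mono_neg)
  moreover have "continuous (at_left (Sup A)) (\<lambda>x::real. c * x)" by (intro continuous_intros)
  ultimately show ?thesis using continuous_at_Sup_antimono[of "\<lambda>x. c * x" A] assms by simp
qed

lemma Sup_scale_neg:
  fixes A :: "real set"
  assumes "c < 0" "A \<noteq> {}" "bdd_below A"
  shows "Sup ((\<lambda>x. c * x) ` A) = c * Inf A"
proof -
  have "antimono_on UNIV (\<lambda>x::real. c * x)" using assms(1)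
    by (auto simp: monotone_on_def mult_left_mono_neg)
  moreover have "continuous (at_right (Inf A)) (\<lambda>x::real. c * x)" by (intro continuous_intros)
  ultimately show ?thesis using continuous_at_Inf_antimono[of "\<lambda>x. c * x" A] assms by simp
qed

lemma fterm_scale:
  assumes u: "fuzzy_number u" and v: "fuzzy_number v" and c: "c \<noteq> 0" and a: "a \<in> {0..1}"
  shows "fterm (fscale c u) (fscale c v) a \<le> \<bar>c\<bar> * fterm u v a"
proof -
  have a0: "0 \<le> a" "a \<le> 1" using a by auto
  note lu = lo_eq[OF fscale_fn[OF u] a0, of c] lo_eq[OF u a0]
  note lv = lo_eq[OF fscale_fn[OF v] a0, of c] lo_eq[OF v a0]
  note hu = hi_eq[OF fscale_fn[OF u] a0, of c] hi_eq[OF u a0]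
  note hv = hi_eq[OF fscale_fn[OF v] a0, of c] hi_eq[OF v a0]
  note ne = cutset_ne[OF u a0(2)] cutset_ne[OF v a0(2)]
  note bd = cutset_bdd[OF u a0(1)] cutset_bdd[OF v a0(1)]
  show ?thesis
  proof (cases "c > 0")
    case True
    have e: "Inf ((\<lambda>x. c * x) ` cutset u a) = c * Inf (cutset u a)"
            "Inf ((\<lambda>x. c * x) ` cutset v a) = c * Inf (cutset v a)"
            "Sup ((\<lambda>x. c * x) ` cutset u a) = c * Sup (cutset u a)"
            "Sup ((\<lambda>x. c * x) ` cutset v a) = c * Sup (cutset v a)"
      by (rule Inf_scale_pos[OF True ne(1) bd(1)], rule Inf_scale_pos[OF True ne(2) bd(4)],
          rule Sup_scale_pos[OF True ne(1) bd(2)], rule Sup_scale_pos[OF True ne(2) bd(5)])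
    have "\<bar>c\<bar> = c" using True by simp
    then show ?thesis
      unfolding fterm_def lu lv hu hv cutset_scale[OF c] e abs_scale
      using max_scale[of c] True by simp
  next
    case False
    then have cn: "c < 0" using c by simp
    then show ?thesis
      unfolding fterm_def lu lv hu hv cutset_scale[OF c]
      using ne bd
      by (simp add: Inf_scale_neg Sup_scale_neg abs_scale max_scale)
  qed
qed

lemma fdist_scale_le:
  assumes u: "fuzzy_number u" and v: "fuzzy_number v"
  shows "fdist (fscale c u) (fscale c v) \<le> \<bar>c\<bar> * fdist u v"
proof (cases "c = 0")
  case True
  then show ?thesis by (simp add: fscale0 fdist_crisp)
next
  case False
  show ?thesis
  proof (rule fdist_le, intro ballI)
    fix a :: real assume a: "a \<in> {0..1}"
    have "fterm (fscale c u) (fscale c v) a \<le> \<bar>c\<bar> * fterm u v a" by (rule fterm_scale[OF u v False a])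
    also have "\<dots> \<le> \<bar>c\<bar> * fdist u v"
      by (rule mult_left_mono) (use fterm_le_fdist[OF u v a] in auto)
    finally show "fterm (fscale c u) (fscale c v) a \<le> \<bar>c\<bar> * fdist u v" .
  qed
qed



lemma fadd_bdd: "fuzzy_number u \<Longrightarrow> bdd_above (range (\<lambda>s. min (u s) (v (t - s))))"
  by (intro bdd_aboveI2[where M=1]) (meson fn_range min.coboundedI1)

lemma fadd_ge: "fuzzy_number u \<Longrightarrow> min (u s) (v (t - s)) \<le> fadd u v t"
  unfolding fadd_def by (rule cSUP_upper) (auto simp: fadd_bdd)

lemma fadd_range:
  assumes "fuzzy_number u" "fuzzy_number v"
  shows "0 \<le> fadd u v t \<and> fadd u v t \<le> 1"
proof
  have "0 \<le> min (u 0) (v (t - 0))" using fn_range[OF assms(1)] fn_range[OF assms(2)] by simp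
  also have "\<dots> \<le> fadd u v t" by (rule fadd_ge[OF assms(1)])
  finally show "0 \<le> fadd u v t" .
  show "fadd u v t \<le> 1" unfolding fadd_def
    by (rule cSUP_least) (use fn_range[OF assms(1)] in \<open>auto simp: min_le_iff_disj\<close>)
qed

lemma fadd_pos:
  assumes "fuzzy_number u" "fuzzy_number v"
  shows "0 < fadd u v t \<longleftrightarrow> (\<exists>s. 0 < u s \<and> 0 < v (t - s))"
  unfolding fadd_def using less_cSUP_iff[of UNIV "\<lambda>s. min (u s) (v (t - s))" 0]
    fadd_bdd[OF assms(1)] by auto

lemma usc_seq:
  assumes h: "usc_fun h" and X: "X \<longlonglongrightarrow> l"
    and ev: "\<forall>e>0. eventually (\<lambda>n. c - e < h (X n)) sequentially"
  shows "c \<le> h l"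
proof (rule ccontr)
  assume "\<not> c \<le> h l"
  define e where "e = (c - h l) / 2"
  have e: "e > 0" using \<open>\<not> c \<le> h l\<close> by (simp add: e_def)
  obtain d where d: "d > 0" "\<forall>y. \<bar>y - l\<bar> < d \<longrightarrow> h y < h l + e"
    using h e unfolding usc_fun_def by blast
  have "eventually (\<lambda>n. dist (X n) l < d) sequentially" using tendstoD[OF X d(1)] .
  moreover have "eventually (\<lambda>n. c - e < h (X n)) sequentially" using ev e by blast
  ultimately have "eventually (\<lambda>n. False) sequentially"
  proof (rule eventually_elim2)
    fix n assume "dist (X n) l < d" "c - e < h (X n)"
    then have "h (X n) < h l + e" using d by (simp add: dist_real_def)
    moreover have "c - e = h l + e" using e_def by (simp add: field_simps)
    ultimately show False using \<open>c - e < h (X n)\<close> by simp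
  qed
  then show False using eventually_False_sequentially by blast
qed

lemma fadd_attain:
  assumes u: "fuzzy_number u" and v: "fuzzy_number v" and a: "0 < a" and le: "a \<le> fadd u v t"
  shows "\<exists>s. a \<le> u s \<and> a \<le> v (t - s)"
proof -
  define g where "g = (\<lambda>s. min (u s) (v (t - s)))"
  have "\<forall>n::nat. \<exists>s. a - a / (real n + 2) < g s"
  proof
    fix n :: nat
    have "a - a / (real n + 2) < fadd u v t" using a le by (smt (verit) divide_pos_pos of_nat_0_le_iff)
    then show "\<exists>s. a - a / (real n + 2) < g s"
      unfolding fadd_def g_def using less_cSUP_iff[OF _ fadd_bdd[OF u]] by auto
  qed
  then obtain S where S: "\<And>n. a - a / (real n + 2) < g (S n)" by metis
  have pos: "a - a / (real n + 2) \<ge> 0" for n :: nat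
  proof -
    have "a / (real n + 2) \<le> a / 1" using a by (intro divide_left_mono) auto
    then show ?thesis by simp
  qed
  have Sin: "S n \<in> closure (supp u)" for n
  proof -
    have "0 < u (S n)" using S[of n] pos[of n] by (simp add: g_def)
    then show ?thesis using closure_subset by (force simp: supp_def)
  qed
  have "compact (closure (supp u))" using fn_bounded[OF u] compact_closure by blast
  then obtain l r where r: "strict_mono r" and lim: "(S \<circ> r) \<longlonglongrightarrow> l"
    using Sin unfolding compact_def by blast
  have ev: "eventually (\<lambda>n. a - e < g (S (r n))) sequentially" if e: "e > 0" for e
  proof -
    obtain N :: nat where N: "a / e < real N" using reals_Archimedean2 by blast
    show ?thesis unfolding eventually_sequentially
    proof (intro exI[of _ N] allI impI)
      fix n assume n: "N \<le> n"
      have "real N \<le> real (r n)" using seq_suble[OF r, of n] n by simp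
      then have "e * real N \<le> e * real (r n)" using e by (intro mult_left_mono) auto
      moreover have "a < e * real N" using N e by (simp add: divide_less_eq mult.commute)
      moreover have "e * (real (r n) + 2) = e * real (r n) + 2 * e" by (simp add: algebra_simps)
      ultimately have "a < e * (real (r n) + 2)" using e by linarith
      then have "a / (real (r n) + 2) < e" by (simp add: divide_less_eq mult.commute)
      then show "a - e < g (S (r n))" using S[of "r n"] by simp
    qed
  qed
  have "a \<le> u l"
  proof (rule usc_seq[of u "S \<circ> r"])
    show "usc_fun u" using u by (simp add: fuzzy_number_def)
    show "(S \<circ> r) \<longlonglongrightarrow> l" by (rule lim)
    show "\<forall>e>0. \<forall>\<^sub>F n in sequentially. a - e < u ((S \<circ> r) n)"
    proof (intro allI impI)
      fix e :: real assume "e > 0"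
      show "\<forall>\<^sub>F n in sequentially. a - e < u ((S \<circ> r) n)"
        using ev[OF \<open>e > 0\<close>] by (rule eventually_mono) (simp add: g_def)
    qed
  qed
  moreover have "a \<le> v (t - l)"
  proof (rule usc_seq[of v "\<lambda>n. t - S (r n)"])
    show "usc_fun v" using v by (simp add: fuzzy_number_def)
    show "(\<lambda>n. t - S (r n)) \<longlonglongrightarrow> t - l"
      using lim by (intro tendsto_intros) (simp add: o_def)
    show "\<forall>e>0. \<forall>\<^sub>F n in sequentially. a - e < v (t - S (r n))"
    proof (intro allI impI)
      fix e :: real assume "e > 0"
      show "\<forall>\<^sub>F n in sequentially. a - e < v (t - S (r n))"
        using ev[OF \<open>e > 0\<close>] by (rule eventually_mono) (simp add: g_def)
    qed
  qed
  ultimately show ?thesis by blast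
qed

lemma Inf_msum:
  fixes A B :: "real set"
  assumes "A \<noteq> {}" "B \<noteq> {}" "bdd_below A" "bdd_below B"
  shows "Inf {x + y |x y. x \<in> A \<and> y \<in> B} = Inf A + Inf B"
proof -
  let ?S = "{x + y |x y. x \<in> A \<and> y \<in> B}"
  have ne: "?S \<noteq> {}" using assms by blast
  have lb: "\<forall>z\<in>?S. Inf A + Inf B \<le> z" using assms by (auto intro: add_mono cInf_lower)
  have 1: "Inf A + Inf B \<le> Inf ?S" using ne lb by (meson cInf_greatest)
  have bS: "bdd_below ?S" using lb by (meson bdd_below.unfold)
  have "Inf ?S - y \<le> Inf A" if y: "y \<in> B" for y
  proof (rule cInf_greatest[OF assms(1)])
    fix x assume "x \<in> A"
    then have "x + y \<in> ?S" using y by blast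
    then have "Inf ?S \<le> x + y" using bS by (rule cInf_lower)
    then show "Inf ?S - y \<le> x" by simp
  qed
  then have "Inf ?S - Inf A \<le> Inf B"
    by (intro cInf_greatest[OF assms(2)]) force
  with 1 show ?thesis by simp
qed

lemma Sup_msum:
  fixes A B :: "real set"
  assumes "A \<noteq> {}" "B \<noteq> {}" "bdd_above A" "bdd_above B"
  shows "Sup {x + y |x y. x \<in> A \<and> y \<in> B} = Sup A + Sup B"
proof -
  let ?S = "{x + y |x y. x \<in> A \<and> y \<in> B}"
  have ne: "?S \<noteq> {}" using assms by blast
  have ub: "\<forall>z\<in>?S. z \<le> Sup A + Sup B" using assms by (auto intro: add_mono cSup_upper)
  have 1: "Sup ?S \<le> Sup A + Sup B" using ne ub by (meson cSup_least)
  have bS: "bdd_above ?S" using ub by (meson bdd_above.unfold)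
  have "Sup A \<le> Sup ?S - y" if y: "y \<in> B" for y
  proof (rule cSup_least[OF assms(1)])
    fix x assume "x \<in> A"
    then have "x + y \<in> ?S" using y by blast
    then have "x + y \<le> Sup ?S" using bS by (rule cSup_upper)
    then show "x \<le> Sup ?S - y" by simp
  qed
  then have "Sup B \<le> Sup ?S - Sup A"
    by (intro cSup_least[OF assms(2)]) force
  with 1 show ?thesis by simp
qed

lemma cutset_fadd:
  assumes u: "fuzzy_number u" and v: "fuzzy_number v" and a: "0 \<le> a" "a \<le> 1"
  shows "cutset (fadd u v) a = {x + y |x y. x \<in> cutset u a \<and> y \<in> cutset v a}"
proof (cases "a = 0")
  case True
  show ?thesis
  proof (intro set_eqI iffI)
    fix t assume "t \<in> cutset (fadd u v) a"
    then obtain s where "0 < u s" "0 < v (t - s)" using fadd_pos[OF u v] True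
      by (auto simp: cutset_def supp_def)
    then have "s \<in> cutset u a" "t - s \<in> cutset v a" "t = s + (t - s)"
      using True by (auto simp: cutset_def supp_def)
    then show "t \<in> {x + y |x y. x \<in> cutset u a \<and> y \<in> cutset v a}" by blast
  next
    fix t assume "t \<in> {x + y |x y. x \<in> cutset u a \<and> y \<in> cutset v a}"
    then obtain x y where "x \<in> cutset u a" "y \<in> cutset v a" "t = x + y" by blast
    then have "0 < u x" "0 < v (t - x)" using True by (auto simp: cutset_def supp_def)
    then have "0 < fadd u v t" using fadd_pos[OF u v] by blast
    then show "t \<in> cutset (fadd u v) a" using True by (simp add: cutset_def supp_def)
  qed
next
  case False
  then have a0: "0 < a" using a by simp
  show ?thesis
  proof (intro set_eqI iffI)
    fix t assume "t \<in> cutset (fadd u v) a"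
    then have "a \<le> fadd u v t" using False by (simp add: cutset_def)
    then obtain s where "a \<le> u s" "a \<le> v (t - s)" using fadd_attain[OF u v a0] by blast
    then have "s \<in> cutset u a" "t - s \<in> cutset v a" "t = s + (t - s)"
      using False by (auto simp: cutset_def)
    then show "t \<in> {x + y |x y. x \<in> cutset u a \<and> y \<in> cutset v a}" by blast
  next
    fix t assume "t \<in> {x + y |x y. x \<in> cutset u a \<and> y \<in> cutset v a}"
    then obtain x y where "x \<in> cutset u a" "y \<in> cutset v a" "t = x + y" by blast
    then have "a \<le> min (u x) (v (t - x))" using False by (auto simp: cutset_def)
    also have "\<dots> \<le> fadd u v t" by (rule fadd_ge[OF u])
    finally show "t \<in> cutset (fadd u v) a" using False by (simp add: cutset_def)
  qed
qed

lemma usc_closed: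
  assumes h: "usc_fun h"
  shows "closed {t. a \<le> h t}"
  unfolding closed_def open_dist
proof (intro ballI)
  fix x assume "x \<in> - {t. a \<le> h t}"
  then have hx: "h x < a" by simp
  obtain d where d: "d > 0" "\<forall>y. \<bar>y - x\<bar> < d \<longrightarrow> h y < h x + (a - h x)"
    using h hx unfolding usc_fun_def by (meson diff_gt_0_iff_gt)
  show "\<exists>e>0. \<forall>y. dist y x < e \<longrightarrow> y \<in> - {t. a \<le> h t}"
    using d by (intro exI[of _ d]) (auto simp: dist_real_def)
qed



lemma fadd_fn:
  assumes u: "fuzzy_number u" and v: "fuzzy_number v"
  shows "fuzzy_number (fadd u v)"
proof -
  let ?w = "fadd u v"
  have rng: "0 \<le> ?w t \<and> ?w t \<le> 1" for t by (rule fadd_range[OF u v])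
  obtain t0 where t0: "u t0 = 1" using fn_normal[OF u] by blast
  obtain t1 where t1: "v t1 = 1" using fn_normal[OF v] by blast
  have "min (u t0) (v ((t0 + t1) - t0)) \<le> ?w (t0 + t1)" by (rule fadd_ge[OF u])
  then have "?w (t0 + t1) = 1" using t0 t1 rng[of "t0 + t1"] by simp
  then have norm: "\<exists>t. ?w t = 1" by blast
  have conv: "min (?w x) (?w y) \<le> ?w (l * x + (1 - l) * y)" if l: "0 \<le> l" "l \<le> 1" for x y l
  proof (cases "min (?w x) (?w y) \<le> 0")
    case True
    then show ?thesis using rng by (meson order_trans)
  next
    case False
    let ?m = "min (?w x) (?w y)"
    have m: "0 < ?m" using False by linarith
    obtain x1 where x1: "?m \<le> u x1" "?m \<le> v (x - x1)"
      using fadd_attain[OF u v m, of x] by auto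
    obtain y1 where y1: "?m \<le> u y1" "?m \<le> v (y - y1)"
      using fadd_attain[OF u v m, of y] by auto
    let ?s = "l * x1 + (1 - l) * y1"
    have "min (u x1) (u y1) \<le> u ?s" using u l unfolding fuzzy_number_def by blast
    then have us: "?m \<le> u ?s" using x1 y1 by linarith
    have eq: "(l * x + (1 - l) * y) - ?s = l * (x - x1) + (1 - l) * (y - y1)"
      by (simp add: algebra_simps)
    have "min (v (x - x1)) (v (y - y1)) \<le> v (l * (x - x1) + (1 - l) * (y - y1))"
      using v l unfolding fuzzy_number_def by blast
    then have vs: "?m \<le> v ((l * x + (1 - l) * y) - ?s)" unfolding eq using x1 y1 by linarith
    have "min (u ?s) (v ((l * x + (1 - l) * y) - ?s)) \<le> ?w (l * x + (1 - l) * y)"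
      by (rule fadd_ge[OF u])
    then show ?thesis using us vs by linarith
  qed
  have usc: "usc_fun ?w"
    unfolding usc_fun_def
  proof (intro allI impI)
    fix x e :: real assume e: "0 < e"
    let ?a = "?w x + e"
    show "\<exists>d>0. \<forall>y. \<bar>y - x\<bar> < d \<longrightarrow> ?w y < ?w x + e"
    proof (cases "?a > 1")
      case True
      then show ?thesis using rng by (intro exI[of _ 1]) (auto intro: le_less_trans)
    next
      case False
      have a0: "0 < ?a" using rng[of x] e by linarith
      have a1: "?a \<le> 1" using False by simp
      have cu: "compact (cutset u ?a)" using a0 usc_closed[of u ?a] u cutset_bdd(3)[OF u, of ?a]
        by (auto simp: cutset_def fuzzy_number_def compact_eq_bounded_closed)
      have cv: "compact (cutset v ?a)" using a0 usc_closed[of v ?a] v cutset_bdd(3)[OF v, of ?a]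
        by (auto simp: cutset_def fuzzy_number_def compact_eq_bounded_closed)
      have "compact (cutset ?w ?a)"
        unfolding cutset_fadd[OF u v less_imp_le[OF a0] a1] by (rule compact_sums[OF cu cv])
      then have "open (- cutset ?w ?a)" by (intro open_Compl compact_imp_closed)
      moreover have "x \<in> - cutset ?w ?a" using a0 e by (simp add: cutset_def)
      ultimately obtain d where d: "d > 0" "\<forall>y. dist y x < d \<longrightarrow> y \<in> - cutset ?w ?a"
        unfolding open_dist by blast
      show ?thesis
      proof (intro exI[of _ d] conjI allI impI)
        show "0 < d" by (rule d(1))
        fix y assume "\<bar>y - x\<bar> < d"
        then have "y \<in> - cutset ?w ?a" using d by (simp add: dist_real_def)
        then show "?w y < ?w x + e" using a0 by (simp add: cutset_def)
      qed
    qed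
  qed
  have "supp ?w = {x + y |x y. x \<in> supp u \<and> y \<in> supp v}"
    using cutset_fadd[OF u v, of 0] by (simp add: cutset_def)
  moreover obtain B1 where B1: "\<forall>x\<in>supp u. norm x \<le> B1" using fn_bounded[OF u] unfolding bounded_iff by blast
  moreover obtain B2 where B2: "\<forall>x\<in>supp v. norm x \<le> B2" using fn_bounded[OF v] unfolding bounded_iff by blast
  ultimately have "bounded (supp ?w)" unfolding bounded_iff
    by (intro exI[of _ "B1 + B2"]) (force intro: order_trans[OF norm_triangle_ineq add_mono])
  then have bnd: "compact (closure {t. 0 < ?w t})" by (simp add: compact_closure supp_def)
  show ?thesis unfolding fuzzy_number_def
    apply (intro conjI allI impI)
    apply (simp_all only: rng norm usc bnd)
    apply (rule conv; simp)
    done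
qed

lemma fterm_add:
  assumes u1: "fuzzy_number u1" and v1: "fuzzy_number v1"
    and u2: "fuzzy_number u2" and v2: "fuzzy_number v2" and a: "a \<in> {0..1}"
  shows "fterm (fadd u1 v1) (fadd u2 v2) a \<le> fterm u1 u2 a + fterm v1 v2 a"
proof -
  have a0: "0 \<le> a" "a \<le> 1" using a by auto
  have lo: "fcut_lo (fadd u v) a = fcut_lo u a + fcut_lo v a"
    if u: "fuzzy_number u" and v: "fuzzy_number v" for u v
    unfolding lo_eq[OF fadd_fn[OF u v] a0] lo_eq[OF u a0] lo_eq[OF v a0] cutset_fadd[OF u v a0]
    by (rule Inf_msum[OF cutset_ne[OF u a0(2)] cutset_ne[OF v a0(2)] cutset_bdd(1)[OF u a0(1)] cutset_bdd(1)[OF v a0(1)]])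
  have hi: "fcut_hi (fadd u v) a = fcut_hi u a + fcut_hi v a"
    if u: "fuzzy_number u" and v: "fuzzy_number v" for u v
    unfolding hi_eq[OF fadd_fn[OF u v] a0] hi_eq[OF u a0] hi_eq[OF v a0] cutset_fadd[OF u v a0]
    by (rule Sup_msum[OF cutset_ne[OF u a0(2)] cutset_ne[OF v a0(2)] cutset_bdd(2)[OF u a0(1)] cutset_bdd(2)[OF v a0(1)]])
  show ?thesis
    unfolding fterm_def lo[OF u1 v1] lo[OF u2 v2] hi[OF u1 v1] hi[OF u2 v2]
    by (simp add: max_def abs_triangle_ineq) linarith?
qed

lemma fdist_add_le:
  assumes u1: "fuzzy_number u1" and v1: "fuzzy_number v1"
    and u2: "fuzzy_number u2" and v2: "fuzzy_number v2"
  shows "fdist (fadd u1 v1) (fadd u2 v2) \<le> fdist u1 u2 + fdist v1 v2"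
proof (rule fdist_le, intro ballI)
  fix a :: real assume a: "a \<in> {0..1}"
  have "fterm (fadd u1 v1) (fadd u2 v2) a \<le> fterm u1 u2 a + fterm v1 v2 a"
    by (rule fterm_add[OF assms a])
  also have "\<dots> \<le> fdist u1 u2 + fdist v1 v2"
    using fterm_le_fdist[OF u1 u2 a] fterm_le_fdist[OF v1 v2 a] by simp
  finally show "fterm (fadd u1 v1) (fadd u2 v2) a \<le> fdist u1 u2 + fdist v1 v2" .
qed



lemma bg_finite: "finite (bg_idx \<beta> \<gamma> n)"
proof -
  have "bg_idx \<beta> \<gamma> n \<subseteq> {..nat \<lceil>\<gamma> n\<rceil>}"
    unfolding bg_idx_def by (auto simp: le_nat_iff le_ceiling_iff)
  then show ?thesis using finite_subset by blast
qed

lemma weighted_le: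
  fixes t d e :: "nat \<Rightarrow> real"
  assumes "\<forall>k\<in>I. 0 \<le> t k" "\<forall>k\<in>I. 0 \<le> d k \<and> d k \<le> e k" "0 \<le> c"
  shows "0 \<le> c * (\<Sum>k\<in>I. t k * d k) \<and> c * (\<Sum>k\<in>I. t k * d k) \<le> c * (\<Sum>k\<in>I. t k * e k)"
proof
  show "0 \<le> c * (\<Sum>k\<in>I. t k * d k)" using assms by (intro mult_nonneg_nonneg sum_nonneg) auto
  show "c * (\<Sum>k\<in>I. t k * d k) \<le> c * (\<Sum>k\<in>I. t k * e k)"
    using assms by (intro mult_left_mono sum_mono) auto
qed

lemma part1:
  assumes t_pos: "\<forall>k\<ge>1. t k > 0"
    and F: "N_lim \<theta> a b \<beta> \<gamma> t fs f" and G: "N_lim \<theta> a b \<beta> \<gamma> t gs g"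
  shows "N_lim \<theta> a b \<beta> \<gamma> t (\<lambda>k x. fadd (fs k x) (gs k x)) (\<lambda>x. fadd (f x) (g x)) \<and>
        (\<forall>c::real. N_lim \<theta> a b \<beta> \<gamma> t (\<lambda>k x. fscale c (fs k x)) (\<lambda>x. fscale c (f x)))"
proof -
  have tnn: "\<forall>k\<in>bg_idx \<beta> \<gamma> n. 0 \<le> t k" for n using t_pos by (auto simp: bg_idx_def less_imp_le)
  have cnn: "0 \<le> 1 / Tbg \<beta> \<gamma> t n powr \<theta>" for n by simp
  have fsf: "\<And>k x. x \<in> {a..b} \<Longrightarrow> fuzzy_number (fs k x)" "\<And>x. x \<in> {a..b} \<Longrightarrow> fuzzy_number (f x)"
    using F by (auto simp: N_lim_def fuzzy_fun_def)
  have gsf: "\<And>k x. x \<in> {a..b} \<Longrightarrow> fuzzy_number (gs k x)" "\<And>x. x \<in> {a..b} \<Longrightarrow> fuzzy_number (g x)"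
    using G by (auto simp: N_lim_def fuzzy_fun_def)
  have Fl: "\<And>x. x \<in> {a..b} \<Longrightarrow> ((\<lambda>n. (1 / (Tbg \<beta> \<gamma> t n) powr \<theta>) *
        (\<Sum>k\<in>bg_idx \<beta> \<gamma> n. t k * fdist (fs k x) (f x))) \<longlongrightarrow> 0) sequentially"
    using F by (auto simp: N_lim_def)
  have Gl: "\<And>x. x \<in> {a..b} \<Longrightarrow> ((\<lambda>n. (1 / (Tbg \<beta> \<gamma> t n) powr \<theta>) *
        (\<Sum>k\<in>bg_idx \<beta> \<gamma> n. t k * fdist (gs k x) (g x))) \<longlongrightarrow> 0) sequentially"
    using G by (auto simp: N_lim_def)
  have add: "N_lim \<theta> a b \<beta> \<gamma> t (\<lambda>k x. fadd (fs k x) (gs k x)) (\<lambda>x. fadd (f x) (g x))"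
    unfolding N_lim_def fuzzy_fun_def
  proof (intro conjI allI ballI)
    fix k x assume x: "x \<in> {a..b}"
    show "fuzzy_number (fadd (fs k x) (gs k x))" using fadd_fn fsf gsf x by blast
  next
    fix x assume x: "x \<in> {a..b}"
    show "fuzzy_number (fadd (f x) (g x))" using fadd_fn fsf gsf x by blast
  next
    fix x assume x: "x \<in> {a..b}"
    let ?c = "\<lambda>n. 1 / Tbg \<beta> \<gamma> t n powr \<theta>"
    let ?I = "bg_idx \<beta> \<gamma>"
    have "((\<lambda>n. ?c n * (\<Sum>k\<in>?I n. t k * fdist (fs k x) (f x)) + ?c n * (\<Sum>k\<in>?I n. t k * fdist (gs k x) (g x))) \<longlongrightarrow> 0 + 0) sequentially"
      by (intro tendsto_add Fl Gl x)
    moreover have "?c n * (\<Sum>k\<in>?I n. t k * (fdist (fs k x) (f x) + fdist (gs k x) (g x))) =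
       ?c n * (\<Sum>k\<in>?I n. t k * fdist (fs k x) (f x)) + ?c n * (\<Sum>k\<in>?I n. t k * fdist (gs k x) (g x))" for n
      by (simp only: distrib_left sum.distrib)
    ultimately have lim: "((\<lambda>n. ?c n * (\<Sum>k\<in>?I n. t k * (fdist (fs k x) (f x) + fdist (gs k x) (g x)))) \<longlongrightarrow> 0) sequentially"
      by simp
    have bnd: "0 \<le> ?c n * (\<Sum>k\<in>?I n. t k * fdist (fadd (fs k x) (gs k x)) (fadd (f x) (g x))) \<and>
       ?c n * (\<Sum>k\<in>?I n. t k * fdist (fadd (fs k x) (gs k x)) (fadd (f x) (g x))) \<le>
       ?c n * (\<Sum>k\<in>?I n. t k * (fdist (fs k x) (f x) + fdist (gs k x) (g x)))" for n
      by (rule weighted_le[OF tnn _ cnn])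
         (intro ballI conjI fdist_nonneg fadd_fn fdist_add_le fsf gsf x)
    show "((\<lambda>n. ?c n * (\<Sum>k\<in>?I n. t k * fdist (fadd (fs k x) (gs k x)) (fadd (f x) (g x)))) \<longlongrightarrow> 0) sequentially"
      by (rule tendsto_sandwich[OF _ _ tendsto_const lim]) (use bnd in auto)
  qed
  have scale: "N_lim \<theta> a b \<beta> \<gamma> t (\<lambda>k x. fscale c (fs k x)) (\<lambda>x. fscale c (f x))" for c
    unfolding N_lim_def fuzzy_fun_def
  proof (intro conjI allI ballI)
    fix k x assume x: "x \<in> {a..b}"
    show "fuzzy_number (fscale c (fs k x))" using fscale_fn fsf x by blast
  next
    fix x assume x: "x \<in> {a..b}"
    show "fuzzy_number (fscale c (f x))" using fscale_fn fsf x by blast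
  next
    fix x assume x: "x \<in> {a..b}"
    let ?c = "\<lambda>n. 1 / Tbg \<beta> \<gamma> t n powr \<theta>"
    let ?I = "bg_idx \<beta> \<gamma>"
    have "((\<lambda>n. \<bar>c\<bar> * (?c n * (\<Sum>k\<in>?I n. t k * fdist (fs k x) (f x)))) \<longlongrightarrow> \<bar>c\<bar> * 0) sequentially"
      by (intro tendsto_mult tendsto_const Fl x)
    then have L: "((\<lambda>n. \<bar>c\<bar> * (?c n * (\<Sum>k\<in>?I n. t k * fdist (fs k x) (f x)))) \<longlongrightarrow> 0) sequentially"
      by simp
    have E: "?c n * (\<Sum>k\<in>?I n. t k * (\<bar>c\<bar> * fdist (fs k x) (f x))) =
        \<bar>c\<bar> * (?c n * (\<Sum>k\<in>?I n. t k * fdist (fs k x) (f x)))" for n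
      by (simp only: sum_distrib_left mult.left_commute)
    have lim: "((\<lambda>n. ?c n * (\<Sum>k\<in>?I n. t k * (\<bar>c\<bar> * fdist (fs k x) (f x)))) \<longlongrightarrow> 0) sequentially"
      unfolding E by (rule L)
    have bnd: "0 \<le> ?c n * (\<Sum>k\<in>?I n. t k * fdist (fscale c (fs k x)) (fscale c (f x))) \<and>
       ?c n * (\<Sum>k\<in>?I n. t k * fdist (fscale c (fs k x)) (fscale c (f x))) \<le>
       ?c n * (\<Sum>k\<in>?I n. t k * (\<bar>c\<bar> * fdist (fs k x) (f x)))" for n
      by (rule weighted_le[OF tnn _ cnn])
         (intro ballI conjI fdist_nonneg fscale_fn fdist_scale_le fsf x)
    show "((\<lambda>n. ?c n * (\<Sum>k\<in>?I n. t k * fdist (fscale c (fs k x)) (fscale c (f x)))) \<longlongrightarrow> 0) sequentially"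
      by (rule tendsto_sandwich[OF _ _ tendsto_const lim]) (use bnd in auto)
  qed
  show ?thesis using add scale by blast
qed

lemma part2:
  assumes T_inf: "filterlim (Tbg \<beta> \<gamma> t) at_top sequentially"
    and th: "0 < \<theta>" "\<theta> \<le> \<delta>"
    and F: "N_lim \<theta> a b \<beta> \<gamma> t fs f"
  shows "N_lim \<delta> a b \<beta> \<gamma> t fs f"
  unfolding N_lim_def
proof (intro conjI ballI)
  show "\<forall>k. fuzzy_fun a b (fs k)" "fuzzy_fun a b f" using F by (auto simp: N_lim_def)
next
  fix x assume x: "x \<in> {a..b}"
  let ?S = "\<lambda>n. \<Sum>k\<in>bg_idx \<beta> \<gamma> n. t k * fdist (fs k x) (f x)"
  let ?T = "Tbg \<beta> \<gamma> t"
  have Fl: "((\<lambda>n. (1 / ?T n powr \<theta>) * ?S n) \<longlongrightarrow> 0) sequentially"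
    using F x by (auto simp: N_lim_def)
  have ev: "eventually (\<lambda>n. 1 \<le> ?T n) sequentially" using T_inf by (simp add: filterlim_at_top)
  have "eventually (\<lambda>n. norm ((1 / ?T n powr \<delta>) * ?S n) \<le> \<bar>(1 / ?T n powr \<theta>) * ?S n\<bar>) sequentially"
    using ev
  proof (rule eventually_mono)
    fix n assume T1: "1 \<le> ?T n"
    have p: "0 < ?T n powr \<theta>" using T1 by simp
    have "?T n powr \<theta> \<le> ?T n powr \<delta>" using powr_mono[OF th(2) T1] .
    then have "1 / ?T n powr \<delta> \<le> 1 / ?T n powr \<theta>" using p by (intro divide_left_mono) auto
    then have "(1 / ?T n powr \<delta>) * \<bar>?S n\<bar> \<le> (1 / ?T n powr \<theta>) * \<bar>?S n\<bar>"
      by (rule mult_right_mono) simp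
    then show "norm ((1 / ?T n powr \<delta>) * ?S n) \<le> \<bar>(1 / ?T n powr \<theta>) * ?S n\<bar>"
      by (simp only: real_norm_def abs_mult abs_divide abs_one powr_ge_zero abs_of_nonneg)
  qed
  moreover have "((\<lambda>n. \<bar>(1 / ?T n powr \<theta>) * ?S n\<bar>) \<longlongrightarrow> 0) sequentially"
    using tendsto_rabs_zero[OF Fl] .
  ultimately show "((\<lambda>n. (1 / ?T n powr \<delta>) * ?S n) \<longlongrightarrow> 0) sequentially"
    by (rule Lim_null_comparison)
qed



lemma part3:
  fixes \<beta> \<gamma> t :: "nat \<Rightarrow> real" and a b :: real
  assumes ab: "a \<le> b"
    and t_pos: "\<forall>k\<ge>1. t k > 0"
    and T_inf: "filterlim (Tbg \<beta> \<gamma> t) at_top sequentially"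
  shows "\<exists>\<theta> \<delta>. 0 < \<theta> \<and> \<theta> < \<delta> \<and> \<delta> \<le> 1 \<and>
          N_set \<theta> a b \<beta> \<gamma> t \<subset> N_set \<delta> a b \<beta> \<gamma> t"
proof -
  define T where "T = Tbg \<beta> \<gamma> t"
  define I where "I = bg_idx \<beta> \<gamma>"
  define h where "h = (\<lambda>n. 1 / sqrt (max 1 (T n)))"
  define R where "R = (\<lambda>k. if {n. k \<in> I n} = {} then 0 else Sup (h ` {n. k \<in> I n}))"
  have Tsum: "T n = (\<Sum>k\<in>I n. t k)" for n by (simp add: T_def I_def Tbg_def)
  have fin: "finite (I n)" for n by (simp add: I_def bg_finite)
  have tpos: "k \<in> I n \<Longrightarrow> 0 < t k" for k n using t_pos by (auto simp: I_def bg_idx_def)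
  have evT: "eventually (\<lambda>n. Z \<le> T n) sequentially" for Z
    using T_inf by (simp add: filterlim_at_top T_def)
  have sq1: "1 \<le> sqrt (max 1 (T n))" for n by simp
  have h_pos: "0 < h n" for n using sq1[of n] by (simp add: h_def)
  have h_le1: "h n \<le> 1" for n using sq1[of n] by (simp add: h_def)
  have R_eq: "R k = Sup (h ` {n. k \<in> I n})" if "{n. k \<in> I n} \<noteq> {}" for k
    unfolding R_def by (rule if_not_P[OF that])
  have R_ge: "h n \<le> R k" if "k \<in> I n" for k n
  proof -
    have ne: "{n. k \<in> I n} \<noteq> {}" using that by blast
    have "h n \<le> Sup (h ` {n. k \<in> I n})"
      by (rule cSup_upper) (use that h_le1 in \<open>auto intro!: bdd_aboveI2[where M=1]\<close>)
    then show ?thesis using R_eq[OF ne] by simp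
  qed
  have R_nn: "0 \<le> R k" for k
  proof (cases "{n. k \<in> I n} = {}")
    case True then show ?thesis by (simp add: R_def)
  next
    case False
    then obtain n where "k \<in> I n" by blast
    then show ?thesis using R_ge h_pos by (meson less_imp_le order_trans)
  qed
  have R_le1: "R k \<le> 1" for k
  proof (cases "{n. k \<in> I n} = {}")
    case True then show ?thesis by (simp add: R_def)
  next
    case False
    then have "Sup (h ` {n. k \<in> I n}) \<le> 1" by (intro cSup_least) (auto simp: h_le1)
    then show ?thesis using R_eq[OF False] by simp
  qed
  have R_small: "\<exists>K. \<forall>k\<ge>K. R k \<le> \<eta>" if eta: "0 < \<eta>" for \<eta>
  proof -
    obtain N where N: "\<And>n. n \<ge> N \<Longrightarrow> 1 / \<eta>^2 \<le> T n"
      using evT[of "1 / \<eta>^2"] unfolding eventually_sequentially by blast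
    have hsmall: "h n \<le> \<eta>" if "n \<ge> N" for n
    proof -
      have "(1 / \<eta>)^2 \<le> max 1 (T n)" using N[OF that] by (simp add: power_divide)
      then have "1 / \<eta> \<le> sqrt (max 1 (T n))" by (rule real_le_rsqrt)
      then have "1 \<le> \<eta> * sqrt (max 1 (T n))" using eta by (simp add: divide_le_eq mult.commute)
      then show ?thesis using sq1[of n] by (simp add: h_def divide_le_eq mult.commute)
    qed
    define M where "M = Max (insert 0 (\<gamma> ` {..<N}))"
    have M: "n < N \<Longrightarrow> \<gamma> n \<le> M" for n unfolding M_def by (intro Max_ge) auto
    define K where "K = nat \<lceil>M\<rceil> + 1"
    have "R k \<le> \<eta>" if k: "k \<ge> K" for k
    proof (cases "{n. k \<in> I n} = {}")
      case True then show ?thesis using eta by (simp add: R_def)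
    next
      case False
      have "h n \<le> \<eta>" if n: "k \<in> I n" for n
      proof -
        have "real k \<le> \<gamma> n" using n by (simp add: I_def bg_idx_def)
        moreover have "M < real K" unfolding K_def by linarith
        ultimately have "\<not> n < N" using M k by (smt (verit) of_nat_le_iff)
        then show ?thesis using hsmall by simp
      qed
      then have "Sup (h ` {n. k \<in> I n}) \<le> \<eta>" using False by (intro cSup_least) auto
      then show ?thesis using R_eq[OF False] by simp
    qed
    then show ?thesis by blast
  qed
  define fs0 where "fs0 = (\<lambda>(k::nat) (x::real). crisp (R k))"
  define f0 where "f0 = (\<lambda>x::real. crisp 0)"
  define Z where "Z = (\<lambda>n. \<Sum>k\<in>I n. t k * R k)"
  have Zeq: "(\<Sum>k\<in>I n. t k * fdist (fs0 k x) (f0 x)) = Z n" for n x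
    unfolding Z_def fs0_def f0_def fdist_crisp using R_nn by simp
  have lowZ: "sqrt (T n) \<le> Z n" if T1: "1 \<le> T n" for n
  proof -
    have "(\<Sum>k\<in>I n. t k * h n) \<le> Z n" unfolding Z_def
      by (intro sum_mono mult_left_mono R_ge) (auto intro: less_imp_le tpos)
    moreover have "(\<Sum>k\<in>I n. t k * h n) = T n / sqrt (T n)"
      using T1 by (simp add: Tsum sum_divide_distrib h_def)
    moreover have "T n / sqrt (T n) = sqrt (T n)" using T1 by (simp add: real_div_sqrt)
    ultimately show ?thesis by simp
  qed
  have Zlim: "((\<lambda>n. (1 / T n powr 1) * Z n) \<longlongrightarrow> 0) sequentially"
  proof (rule tendstoI)
    fix e :: real assume e: "0 < e"
    obtain K where K: "\<And>k. k \<ge> K \<Longrightarrow> R k \<le> e / 2" using R_small[of "e/2"] e by auto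
    define C where "C = (\<Sum>k\<in>{..<K}. \<bar>t k\<bar>)"
    have C0: "0 \<le> C" unfolding C_def by (simp add: sum_nonneg)
    show "\<forall>\<^sub>F n in sequentially. dist ((1 / T n powr 1) * Z n) 0 < e"
      using evT[of "max 1 (2 * C / e + 1)"]
    proof (rule eventually_mono)
      fix n assume Tn: "max 1 (2 * C / e + 1) \<le> T n"
      then have T1: "1 \<le> T n" and T2: "2 * C / e + 1 \<le> T n" by auto
      have Z0: "0 \<le> Z n" unfolding Z_def using R_nn tpos by (intro sum_nonneg mult_nonneg_nonneg) (auto intro: less_imp_le)
      have trm: "t k * R k \<le> (if k < K then \<bar>t k\<bar> else 0) + e / 2 * t k" if "k \<in> I n" for k
      proof (cases "k < K")
        case True
        have "t k * R k \<le> t k * 1" using R_le1 tpos[OF that] by (intro mult_left_mono) auto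
        moreover have "0 \<le> e / 2 * t k" using e tpos[OF that] by simp
        ultimately show ?thesis using True by simp
      next
        case False
        then show ?thesis using K[of k] tpos[OF that] by (simp add: mult.commute mult_left_mono)
      qed
      have "Z n \<le> (\<Sum>k\<in>I n. (if k < K then \<bar>t k\<bar> else 0) + e / 2 * t k)"
        unfolding Z_def by (intro sum_mono trm)
      also have "\<dots> = (\<Sum>k\<in>{k\<in>I n. k < K}. \<bar>t k\<bar>) + e / 2 * T n"
        by (simp add: sum.distrib sum_distrib_left Tsum sum.inter_filter[OF fin])
      also have "(\<Sum>k\<in>{k\<in>I n. k < K}. \<bar>t k\<bar>) \<le> C"
        unfolding C_def by (intro sum_mono2) auto
      finally have ZC: "Z n \<le> C + e / 2 * T n" by simp
      have "2 * C / e < T n" using T2 by linarith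
      then have "2 * C < e * T n" using e by (simp add: divide_less_eq mult.commute)
      then have "Z n < e * T n" using ZC by linarith
      then have "Z n / T n < e" using T1 by (simp add: divide_less_eq)
      then show "dist ((1 / T n powr 1) * Z n) 0 < e" using T1 Z0 by simp
    qed
  qed
  have in1: "N_lim 1 a b \<beta> \<gamma> t fs0 f0"
    unfolding N_lim_def fuzzy_fun_def
  proof (intro conjI allI ballI)
    fix k x show "fuzzy_number (fs0 k x)" by (simp add: fs0_def crisp_fn)
  next
    fix x show "fuzzy_number (f0 x)" by (simp add: f0_def crisp_fn)
  next
    fix x assume "x \<in> {a..b}"
    show "((\<lambda>n. 1 / Tbg \<beta> \<gamma> t n powr 1 * (\<Sum>k\<in>bg_idx \<beta> \<gamma> n. t k * fdist (fs0 k x) (f0 x))) \<longlongrightarrow> 0) sequentially"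
      using Zlim by (simp only: Zeq T_def[symmetric] I_def[symmetric])
  qed
  have notin: "\<not> N_lim (1/2) a b \<beta> \<gamma> t fs0 f" for f
  proof
    assume H: "N_lim (1/2) a b \<beta> \<gamma> t fs0 f"
    have H1: "N_lim 1 a b \<beta> \<gamma> t fs0 f" by (rule part2[OF T_inf _ _ H]) auto
    have aa: "a \<in> {a..b}" using ab by simp
    have fa: "fuzzy_number (f a)" using H aa by (simp add: N_lim_def fuzzy_fun_def)
    define F where "F = (\<lambda>n. \<Sum>k\<in>I n. t k * fdist (crisp (R k)) (f a))"
    have Fl1: "((\<lambda>n. (1 / T n powr 1) * F n) \<longlongrightarrow> 0) sequentially"
      using H1 aa unfolding N_lim_def F_def T_def I_def fs0_def by blast
    have Fl2: "((\<lambda>n. (1 / T n powr (1/2)) * F n) \<longlongrightarrow> 0) sequentially"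
      using H aa unfolding N_lim_def F_def T_def I_def fs0_def by blast
    define D where "D = fdist (crisp 0) (f a)"
    have D0: "0 \<le> D" unfolding D_def by (rule fdist_nonneg[OF crisp_fn fa])
    have tri1: "D \<le> R k + fdist (crisp (R k)) (f a)" for k
    proof -
      have "D \<le> fdist (crisp 0) (crisp (R k)) + fdist (crisp (R k)) (f a)"
        unfolding D_def by (rule fdist_tri[OF crisp_fn crisp_fn fa])
      then show ?thesis using R_nn[of k] by (simp add: fdist_crisp)
    qed
    have key1: "D \<le> (1 / T n powr 1) * Z n + (1 / T n powr 1) * F n" if T1: "1 \<le> T n" for n
    proof -
      have "T n * D = (\<Sum>k\<in>I n. t k * D)" by (simp add: Tsum sum_distrib_right)
      also have "\<dots> \<le> (\<Sum>k\<in>I n. t k * (R k + fdist (crisp (R k)) (f a)))"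
        by (intro sum_mono mult_left_mono tri1) (auto intro: less_imp_le tpos)
      also have "\<dots> = Z n + F n" by (simp add: Z_def F_def distrib_left sum.distrib)
      finally have "T n * D \<le> Z n + F n" .
      then have "D \<le> (Z n + F n) / T n" using T1 by (simp add: le_divide_eq mult.commute)
      then show ?thesis using T1 by (simp add: add_divide_distrib)
    qed
    have "D \<le> 0"
    proof (rule tendsto_le[OF trivial_limit_sequentially])
      show "((\<lambda>n. (1 / T n powr 1) * Z n + (1 / T n powr 1) * F n) \<longlongrightarrow> 0) sequentially"
        using tendsto_add[OF Zlim Fl1] by simp
      show "((\<lambda>n. D) \<longlongrightarrow> D) sequentially" by simp
      show "\<forall>\<^sub>F n in sequentially. D \<le> (1 / T n powr 1) * Z n + (1 / T n powr 1) * F n"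
        using evT[of 1] by (rule eventually_mono) (rule key1)
    qed
    then have D00: "D = 0" using D0 by simp
    have tri2: "R k \<le> fdist (crisp (R k)) (f a)" for k
    proof -
      have "fdist (crisp (R k)) (crisp 0) \<le> fdist (crisp (R k)) (f a) + fdist (f a) (crisp 0)"
        by (rule fdist_tri[OF crisp_fn fa crisp_fn])
      then show ?thesis using R_nn[of k] D00 by (simp add: fdist_crisp D_def fdist_sym)
    qed
    have key2: "1 \<le> (1 / T n powr (1/2)) * F n" if T1: "1 \<le> T n" for n
    proof -
      have "Z n \<le> F n" unfolding Z_def F_def
        by (intro sum_mono mult_left_mono tri2) (auto intro: less_imp_le tpos)
      then have "sqrt (T n) \<le> F n" using lowZ[OF T1] by simp
      moreover have "T n powr (1/2) = sqrt (T n)" using T1 by (simp add: powr_half_sqrt)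
      moreover have "0 < sqrt (T n)" using T1 by simp
      ultimately show ?thesis by (simp add: le_divide_eq)
    qed
    have "eventually (\<lambda>n. dist ((1 / T n powr (1/2)) * F n) 0 < 1/2) sequentially"
      by (rule tendstoD[OF Fl2]) simp
    moreover have "eventually (\<lambda>n. 1 \<le> (1 / T n powr (1/2)) * F n) sequentially"
      using evT[of 1] by (rule eventually_mono) (rule key2)
    ultimately have "eventually (\<lambda>n. False) sequentially"
      by (rule eventually_elim2) (simp only: dist_real_def diff_zero abs_less_iff, linarith)
    then show False using eventually_False_sequentially by blast
  qed
  have P: "N_lim 1 a b \<beta> \<gamma> t fs f" if "N_lim (1/2) a b \<beta> \<gamma> t fs f" for fs f
    by (rule part2[OF T_inf _ _ that]) auto
  have sub: "N_set (1/2) a b \<beta> \<gamma> t \<subseteq> N_set 1 a b \<beta> \<gamma> t"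
    unfolding N_set_def using P by blast
  have "fs0 \<in> N_set 1 a b \<beta> \<gamma> t" unfolding N_set_def using in1 by blast
  moreover have "fs0 \<notin> N_set (1/2) a b \<beta> \<gamma> t" unfolding N_set_def using notin by blast
  ultimately have "N_set (1/2) a b \<beta> \<gamma> t \<subset> N_set 1 a b \<beta> \<gamma> t" using sub by blast
  then show ?thesis by (intro exI[of _ "1/2"] exI[of _ 1]) simp
qed


theorem theorem3p1:
  fixes \<beta> \<gamma> t :: "nat \<Rightarrow> real" and a b :: real
  assumes ab: "a \<le> b"
    and \<beta>_pos: "\<forall>n\<ge>1. \<beta> n > 0" and \<gamma>_pos: "\<forall>n\<ge>1. \<gamma> n > 0"
    and \<beta>_mono: "\<forall>m n. 1 \<le> m \<and> m \<le> n \<longrightarrow> \<beta> m \<le> \<beta> n"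
    and \<gamma>_mono: "\<forall>m n. 1 \<le> m \<and> m \<le> n \<longrightarrow> \<gamma> m \<le> \<gamma> n"
    and \<gamma>\<beta>: "\<forall>n\<ge>1. \<beta> n \<le> \<gamma> n"
    and diff_inf: "filterlim (\<lambda>n. \<gamma> n - \<beta> n) at_top sequentially"
    and t_pos: "\<forall>k\<ge>1. t k > 0"
    and T_inf: "filterlim (Tbg \<beta> \<gamma> t) at_top sequentially"
  shows
    "(\<forall>\<theta> fs f gs g. 0 < \<theta> \<and> \<theta> \<le> 1 \<and>
        N_lim \<theta> a b \<beta> \<gamma> t fs f \<and> N_lim \<theta> a b \<beta> \<gamma> t gs g \<longrightarrow>
        N_lim \<theta> a b \<beta> \<gamma> t (\<lambda>k x. fadd (fs k x) (gs k x)) (\<lambda>x. fadd (f x) (g x)) \<and>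
        (\<forall>c::real. N_lim \<theta> a b \<beta> \<gamma> t (\<lambda>k x. fscale c (fs k x)) (\<lambda>x. fscale c (f x))))
     \<and> (\<forall>\<theta> \<delta>. 0 < \<theta> \<and> \<theta> \<le> \<delta> \<and> \<delta> \<le> 1 \<longrightarrow>
          N_set \<theta> a b \<beta> \<gamma> t \<subseteq> N_set \<delta> a b \<beta> \<gamma> t)
     \<and> (\<exists>\<theta> \<delta>. 0 < \<theta> \<and> \<theta> < \<delta> \<and> \<delta> \<le> 1 \<and>
          N_set \<theta> a b \<beta> \<gamma> t \<subset> N_set \<delta> a b \<beta> \<gamma> t)"
proof -
  have 1: "\<forall>\<theta> fs f gs g. 0 < \<theta> \<and> \<theta> \<le> 1 \<and>
        N_lim \<theta> a b \<beta> \<gamma> t fs f \<and> N_lim \<theta> a b \<beta> \<gamma> t gs g \<longrightarrow>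
        N_lim \<theta> a b \<beta> \<gamma> t (\<lambda>k x. fadd (fs k x) (gs k x)) (\<lambda>x. fadd (f x) (g x)) \<and>
        (\<forall>c::real. N_lim \<theta> a b \<beta> \<gamma> t (\<lambda>k x. fscale c (fs k x)) (\<lambda>x. fscale c (f x)))"
    using part1[OF t_pos] by blast
  have 2: "\<forall>\<theta> \<delta>. 0 < \<theta> \<and> \<theta> \<le> \<delta> \<and> \<delta> \<le> 1 \<longrightarrow>
          N_set \<theta> a b \<beta> \<gamma> t \<subseteq> N_set \<delta> a b \<beta> \<gamma> t"
  proof (intro allI impI subsetI)
    fix \<theta> \<delta> fs assume th: "0 < \<theta> \<and> \<theta> \<le> \<delta> \<and> \<delta> \<le> 1" and fs: "fs \<in> N_set \<theta> a b \<beta> \<gamma> t"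
    then obtain f where "N_lim \<theta> a b \<beta> \<gamma> t fs f" by (auto simp: N_set_def)
    then have "N_lim \<delta> a b \<beta> \<gamma> t fs f" using part2[OF T_inf] th by blast
    then show "fs \<in> N_set \<delta> a b \<beta> \<gamma> t" by (auto simp: N_set_def)
  qed
  have 3: "\<exists>\<theta> \<delta>. 0 < \<theta> \<and> \<theta> < \<delta> \<and> \<delta> \<le> 1 \<and>
          N_set \<theta> a b \<beta> \<gamma> t \<subset> N_set \<delta> a b \<beta> \<gamma> t"
    by (rule part3[OF ab t_pos T_inf])
  show ?thesis using 1 2 3 by blast
qed

end
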